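(* For every $T>0$, $\lambda>0$ and $\epsilon>0$ there is $M=M(T,\lambda,\epsilon)$ such that $$\liminf_{m\to\infty}\mathbb{P}^{(m)}_\sigma\big(\Lambda(T,M,\lambda)\big)>1-\epsilon.$$
   Context: Fix a real exponent $b>0$ and a sequence $\sigma=(\sigma_p)_{p\in\mathcal P}$ of nonnegative reals indexed by the set $\mathcal P$ of primes with $\sum_p\sigma_p<\infty$. For a prime $p$, $\mathbb{Q}_p$ denotes the $p$-adic numbers with absolute value $|\cdot|_p$ and $\mathbb{Z}_p$ its closed unit ball. Let $G_p\subset\mathbb{Q}_p$ be the set of $p$-adic numbers of the form $\sum_{k<0}a_kp^k$ with $a_k\in\{0,\dots,p-1\}$, only finitely many nonzero; $G_p$ is a set of representatives of $\mathbb{Q}_p/\mathbb{Z}_p$ and is given the group structure of $\mathbb{Q}_p/\mathbb{Z}_p$. Let $X^{(p)}$ be a $G_p$-valued random variable with $\Pr(|X^{(p)}|_p=p^k)=(p^b-1)p^{-kb}$ for every integer $k\ge1$, and, conditionally on $|X^{(p)}|_p=p^k$, uniformly distributed on the finite set $\{x\in G_p:|x|_p=p^k\}$. Let $X^{(p)}_1,X^{(p)}_2,\dots$ be i.i.d. copies of $X^{(p)}$ and $S^{(p)}_n=X^{(p)}_1+\dots+X^{(p)}_n$ (sum in the group $G_p$), $S^{(p)}_0=0$. Put $D_p=\frac{p^b(p-1)}{p^{b+1}-1}\sigma_p$. For an integer $m\ge0$, let $\mathbb{P}^{(m)}_p$ be the law on $D(\mathbb{Q}_p)$ (càdlàg paths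 $[0,\infty)\to\mathbb{Q}_p$) of $t\mapsto p^mS^{(p)}_{\lfloor D_pp^{mb}t\rfloor}$, and $\mathbb{P}^{(m)}_\sigma=\prod_{p}\mathbb{P}^{(m)}_p$ the product measure on $\prod_pD(\mathbb{Q}_p)$ (independent components). For $x=(x_p)_p\in\prod_pD(\mathbb{Q}_p)$, $T>0$, $M>0$, $\lambda>0$, define the event $\Lambda(T,M,\lambda)=\{x:\ \sup_{s\le T}|x_p(s)|_p/p<\lambda\text{ for all primes }p\ge M\}$. *)

theory Defs
  imports "HOL-Probability.Probability" "HOL-Computational_Algebra.Primes"
begin

text \<open>p-adic absolute value of a rational number (the rationals embed isometrically in Q_p).
  For x = a/d in lowest terms, |x|_p = p^(v_p(d) - v_p(a)), and |0|_p = 0.\<close>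
definition padic_norm :: "nat \<Rightarrow> rat \<Rightarrow> real" where
  "padic_norm p x =
     (if x = 0 then 0
      else (let (a, d) = quotient_of x in
            real p powr (real (multiplicity (int p) d) - real (multiplicity (int p) a))))"

text \<open>G_p: p-adic numbers of the form sum_{k<0} a_k p^k with finitely many nonzero digits.
  As rationals these are exactly the numbers in [0,1) whose denominator is a power of p.\<close>
definition Gp :: "nat \<Rightarrow> rat set" where
  "Gp p = {x. 0 \<le> x \<and> x < 1 \<and> (\<exists>n::nat. x * of_nat p ^ n \<in> \<int>)}"

text \<open>The group law of G_p (that of Q_p/Z_p on these representatives) is addition mod 1;
  hence S_n = X_1 + ... + X_n computed in G_p is the fractional part of the ordinary sum.\<close>
definition walk :: "(nat \<Rightarrow> 'w \<Rightarrow> rat) \<Rightarrow> nat \<Rightarrow> 'w \<Rightarrow> rat" where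
  "walk X n \<omega> = frac (\<Sum>i\<in>{1..n}. X i \<omega>)"

definition Dconst :: "real \<Rightarrow> (nat \<Rightarrow> real) \<Rightarrow> nat \<Rightarrow> real" where
  "Dconst b \<sigma> p = real p powr b * (real p - 1) / (real p powr (b + 1) - 1) * \<sigma> p"

definition scaled_path ::
  "real \<Rightarrow> (nat \<Rightarrow> real) \<Rightarrow> (nat \<Rightarrow> nat \<Rightarrow> 'w \<Rightarrow> rat) \<Rightarrow> nat \<Rightarrow> 'w \<Rightarrow> nat \<Rightarrow> real \<Rightarrow> rat" where
  "scaled_path b \<sigma> X m \<omega> p t =
     of_nat p ^ m * walk (X p) (nat \<lfloor>Dconst b \<sigma> p * real p powr (real m * b) * t\<rfloor>) \<omega>"

definition Lambda_event :: "real \<Rightarrow> nat \<Rightarrow> real \<Rightarrow> (nat \<Rightarrow> real \<Rightarrow> rat) \<Rightarrow> bool" where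
  "Lambda_event T M lam x \<longleftrightarrow>
     (\<forall>p. prime p \<and> p \<ge> M \<longrightarrow>
        (SUP s\<in>{0..T}. padic_norm p (x p s)) / real p < lam)"

end

theory Submission
  imports Defs
begin

definition Zp :: "nat \<Rightarrow> rat set" where
  "Zp p = {x. \<exists>a d::int. d > 0 \<and> \<not> int p dvd d \<and> x = of_int a / of_int d}"

lemma Zp_int: "prime p \<Longrightarrow> of_int a \<in> Zp p"
  unfolding Zp_def by (rule CollectI, rule exI[of _ a], rule exI[of _ 1]) (auto simp: prime_gt_1_nat)

lemma Zp_add: assumes "prime p" "x \<in> Zp p" "y \<in> Zp p" shows "x + y \<in> Zp p"
proof -
  from assms obtain a d b e where "d > 0" "\<not> int p dvd d" "x = of_int a / of_int d"
     "e > 0" "\<not> int p dvd e" "y = of_int b / of_int e" unfolding Zp_def by auto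
  moreover have "prime (int p)" using assms by simp
  ultimately have "\<not> int p dvd d * e" by (simp add: prime_dvd_mult_iff)
  moreover have "x + y = of_int (a*e + b*d) / of_int (d*e)" using \<open>d>0\<close> \<open>e>0\<close> \<open>x = _\<close> \<open>y = _\<close>
    by (simp add: field_simps)
  ultimately show ?thesis unfolding Zp_def using \<open>d>0\<close> \<open>e>0\<close>
    by (intro CollectI exI[of _ "a*e + b*d"] exI[of _ "d*e"]) auto
qed

lemma Zp_uminus: assumes "x \<in> Zp p" shows "- x \<in> Zp p"
proof -
  from assms obtain a d where "d > 0" "\<not> int p dvd d" "x = of_int a / of_int d"
    unfolding Zp_def by auto
  then show ?thesis unfolding Zp_def by (intro CollectI exI[of _ "-a"] exI[of _ d]) auto
qed

lemma Zp_sum: assumes "prime p" "\<And>i. i \<in> I \<Longrightarrow> f i \<in> Zp p" shows "sum f I \<in> Zp p"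
  using assms(2)
proof (induction I rule: infinite_finite_induct)
  case (infinite A) then show ?case using Zp_int[OF assms(1), of 0] by simp
next
  case empty then show ?case using Zp_int[OF assms(1), of 0] by simp
next
  case (insert x F) then show ?case using Zp_add[OF assms(1)] by simp
qed

lemma Zp_norm: assumes p: "prime p" and x: "x \<in> Zp p" shows "padic_norm p x \<le> 1"
proof (cases "x = 0")
  case True then show ?thesis by (simp add: padic_norm_def)
next
  case False
  from x obtain a d where d: "d > 0" "\<not> int p dvd d" "x = of_int a / of_int d"
    unfolding Zp_def by auto
  obtain a0 d0 where q: "quotient_of x = (a0, d0)" by fastforce
  have x0: "x = of_int a0 / of_int d0" and d0: "d0 > 0" and cop: "coprime a0 d0"
    using quotient_of_div[OF q] quotient_of_denom_pos[OF q] quotient_of_coprime[OF q] by auto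
  have "of_int a0 / of_int d0 = (of_int a / of_int d :: rat)" using x0 d by simp
  hence "a0 * d = a * d0" using d0 d(1)
    by (simp add: field_simps) (metis of_int_eq_iff of_int_mult)
  hence "d0 dvd a0 * d" by (metis dvd_triv_right)
  hence "d0 dvd d" using cop by (metis coprime_commute coprime_dvd_mult_right_iff)
  hence "\<not> int p dvd d0" using d(2) dvd_trans by blast
  hence "multiplicity (int p) d0 = 0" by (rule not_dvd_imp_multiplicity_0)
  hence "padic_norm p x = real p powr (- real (multiplicity (int p) a0))"
    using False q by (simp add: padic_norm_def)
  also have "\<dots> \<le> real p powr 0"
    using p prime_ge_1_nat by (intro powr_mono) auto
  finally show ?thesis using p prime_gt_0_nat by fastforce
qed

lemma norm_Zp: assumes p: "prime p" and n: "padic_norm p x \<le> real p ^ m"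
  shows "of_nat p ^ m * x \<in> Zp p"
proof (cases "x = 0")
  case True then show ?thesis using Zp_int[OF p, of 0] by simp
next
  case False
  obtain a d where q: "quotient_of x = (a, d)" by fastforce
  have x0: "x = of_int a / of_int d" and d0: "d > 0" and cop: "coprime a d"
    using quotient_of_div[OF q] quotient_of_denom_pos[OF q] quotient_of_coprime[OF q] by auto
  have pp: "prime (int p)" using p by simp
  show ?thesis
  proof (cases "int p dvd d")
    case False
    then show ?thesis unfolding Zp_def using d0 x0
      by (intro CollectI exI[of _ "int p ^ m * a"] exI[of _ d]) auto
  next
    case True
    hence na: "\<not> int p dvd a" using cop pp
      by (metis coprime_common_divisor not_prime_unit)
    hence "multiplicity (int p) a = 0" by (rule not_dvd_imp_multiplicity_0)
    define v where "v = multiplicity (int p) d"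
    have "padic_norm p x = real p powr real v"
      using False q \<open>multiplicity (int p) a = 0\<close> by (simp add: padic_norm_def v_def)
    also have "\<dots> = real p ^ v" using p prime_gt_0_nat by (simp add: powr_realpow)
    finally have "real p ^ v \<le> real p ^ m" using n by simp
    hence vm: "v \<le> m" using p prime_gt_1_nat
      by (metis of_nat_1 of_nat_less_iff power_le_imp_le_exp)
    obtain d' where dd: "d = int p ^ v * d'" "\<not> int p dvd d'"
      using multiplicity_decompose'[of d "int p"] d0 pp unfolding v_def
      by (metis less_irrefl not_prime_unit)
    have "d' > 0" using d0 dd(1) p prime_gt_0_nat
      by (metis of_nat_0_less_iff zero_less_mult_pos zero_less_power)
    have "of_nat p ^ m * x = of_int (int p ^ (m - v) * a) / of_int d'"
    proof -
      have "(of_nat p :: rat) ^ m = of_nat p ^ (m - v) * of_nat p ^ v"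
        using vm by (metis le_add_diff_inverse2 power_add)
      then show ?thesis using x0 dd(1) p prime_gt_0_nat \<open>d'>0\<close>
        by (simp add: field_simps)
    qed
    then show ?thesis unfolding Zp_def using \<open>d'>0\<close> dd(2) by blast
  qed
qed


lemma walk_bound:
  assumes p: "prime p" and h: "\<And>i. i \<in> {1..n} \<Longrightarrow> padic_norm p (Y i \<omega>) \<le> real p ^ m"
  shows "padic_norm p (of_nat p ^ m * walk Y n \<omega>) \<le> 1"
proof -
  define S where "S = (\<Sum>i\<in>{1..n}. Y i \<omega>)"
  have "of_nat p ^ m * S = (\<Sum>i\<in>{1..n}. of_nat p ^ m * Y i \<omega>)"
    unfolding S_def by (simp add: sum_distrib_left)
  also have "\<dots> \<in> Zp p" using p h norm_Zp by (intro Zp_sum) auto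
  finally have "of_nat p ^ m * S \<in> Zp p" .
  moreover have "of_nat p ^ m * walk Y n \<omega> = of_nat p ^ m * S + - of_int (int p ^ m * \<lfloor>S\<rfloor>)"
    unfolding walk_def S_def frac_def by (simp add: algebra_simps)
  ultimately have "of_nat p ^ m * walk Y n \<omega> \<in> Zp p"
    using Zp_add[OF p] Zp_uminus Zp_int[OF p] by metis
  then show ?thesis using Zp_norm[OF p] by blast
qed

lemma geo:
  fixes x b :: real assumes "x > 1"
  shows "(\<Sum>k\<in>{1..m}. (x powr b - 1) * x powr (- real k * b)) = 1 - x powr (- real m * b)"
proof (induction m)
  case 0 then show ?case using assms by simp
next
  case (Suc m)
  have e: "x powr b * x powr (- real (Suc m) * b) = x powr (- real m * b)"
  proof -
    have "x powr b * x powr (- real (Suc m) * b) = x powr (b + - real (Suc m) * b)"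
      by (simp add: powr_add)
    also have "b + - real (Suc m) * b = - real m * b" by (simp add: algebra_simps)
    finally show ?thesis .
  qed
  show ?case using Suc e by (simp add: algebra_simps)
qed

lemma sets_finite_dep:
  fixes Y :: "nat \<Rightarrow> 'w \<Rightarrow> rat"
  assumes I: "finite I" and meas: "\<And>i. i \<in> I \<Longrightarrow> Y i \<in> measurable M (count_space UNIV)"
    and dep: "\<And>\<omega> \<omega>'. \<omega> \<in> space M \<Longrightarrow> \<omega>' \<in> space M \<Longrightarrow> (\<forall>i\<in>I. Y i \<omega> = Y i \<omega>') \<Longrightarrow> Q \<omega> = Q \<omega>'"
  shows "{\<omega> \<in> space M. Q \<omega>} \<in> sets M"
proof -
  define V where "V = {v \<in> Pi\<^sub>E I (\<lambda>_. UNIV :: rat set). \<exists>\<omega>\<in>space M. Q \<omega> \<and> (\<forall>i\<in>I. Y i \<omega> = v i)}"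
  have cV: "countable V" unfolding V_def
    by (rule countable_subset[OF _ countable_PiE[OF I]]) auto
  have eq: "{\<omega> \<in> space M. Q \<omega>} = (\<Union>v\<in>V. {\<omega> \<in> space M. \<forall>i\<in>I. Y i \<omega> = v i})"
  proof safe
    fix \<omega> assume "\<omega> \<in> space M" "Q \<omega>"
    then have "restrict (\<lambda>i. Y i \<omega>) I \<in> V" unfolding V_def by auto
    then show "\<omega> \<in> (\<Union>v\<in>V. {\<omega> \<in> space M. \<forall>i\<in>I. Y i \<omega> = v i})" using \<open>\<omega> \<in> space M\<close>
      by (intro UN_I[of "restrict (\<lambda>i. Y i \<omega>) I"]) auto
  next
    fix v \<omega> assume "v \<in> V" "\<omega> \<in> space M" "\<forall>i\<in>I. Y i \<omega> = v i"
    then obtain \<omega>' where "\<omega>' \<in> space M" "Q \<omega>'" "\<forall>i\<in>I. Y i \<omega>' = v i" unfolding V_def by auto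
    then show "Q \<omega>" using dep[of \<omega> \<omega>'] \<open>\<omega> \<in> space M\<close> \<open>\<forall>i\<in>I. Y i \<omega> = v i\<close> by auto
  qed
  have "\<And>v. {\<omega> \<in> space M. \<forall>i\<in>I. Y i \<omega> = v i} \<in> sets M"
  proof -
    fix v
    have "\<And>i. i \<in> I \<Longrightarrow> {\<omega> \<in> space M. Y i \<omega> = v i} \<in> sets M"
    proof -
      fix i assume "i \<in> I"
      have "{\<omega> \<in> space M. Y i \<omega> = v i} = Y i -` {v i} \<inter> space M" by auto
      then show "{\<omega> \<in> space M. Y i \<omega> = v i} \<in> sets M"
        using measurable_sets[OF meas[OF \<open>i \<in> I\<close>], of "{v i}"] by simp
    qed
    then show "{\<omega> \<in> space M. \<forall>i\<in>I. Y i \<omega> = v i} \<in> sets M"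
      using I by (intro sets.sets_Collect_finite_All) auto
  qed
  then show ?thesis unfolding eq using cV by (intro sets.countable_UN'') auto
qed


lemma Dconst_bounds:
  assumes p: "prime p" and b: "b > 0" and s: "\<sigma> p \<ge> 0"
  shows "0 \<le> Dconst b \<sigma> p" "Dconst b \<sigma> p \<le> \<sigma> p"
proof -
  have p1: "real p > 1" using p prime_gt_1_nat by simp
  have pb: "real p powr b \<ge> 1" using p1 b by (simp add: ge_one_powr_ge_zero)
  have pb1: "real p powr (b + 1) = real p powr b * real p" using p1 by (simp add: powr_add)
  have den: "real p powr (b + 1) - 1 > 0" using pb p1 pb1
  proof -
    have "real p powr b * real p \<ge> 1 * real p" using pb p1 by (intro mult_right_mono) auto
    then show ?thesis using pb1 p1 by linarith
  qed
  have num: "real p powr b * (real p - 1) \<le> real p powr (b + 1) - 1" using pb1 pb by (simp add: algebra_simps)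
  have f0: "0 \<le> real p powr b * (real p - 1) / (real p powr (b + 1) - 1)"
    using den p1 by simp
  have f1: "real p powr b * (real p - 1) / (real p powr (b + 1) - 1) \<le> 1"
    using den num by simp
  show "0 \<le> Dconst b \<sigma> p" unfolding Dconst_def using mult_nonneg_nonneg[OF f0 s] by simp
  show "Dconst b \<sigma> p \<le> \<sigma> p" unfolding Dconst_def using f1 s
    using mult_left_mono[OF f1 s] by (simp add: mult.commute)
qed


lemma bad_bound:
  fixes Y :: "'w \<Rightarrow> rat"
  assumes P: "prob_space \<Omega>" and p: "prime p" and b: "b > 0"
    and meas: "Y \<in> measurable \<Omega> (count_space UNIV)"
    and law: "\<And>k. k \<ge> 1 \<Longrightarrow> measure \<Omega> {\<omega> \<in> space \<Omega>. padic_norm p (Y \<omega>) = real p ^ k}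
          = (real p powr b - 1) * real p powr (- real k * b)"
  shows "measure \<Omega> {\<omega> \<in> space \<Omega>. \<not> padic_norm p (Y \<omega>) \<le> real p ^ m} \<le> real p powr (- real m * b)"
proof -
  interpret prob_space \<Omega> by (rule P)
  have p1: "real p > 1" using p prime_gt_1_nat by simp
  define E where "E k = {\<omega> \<in> space \<Omega>. padic_norm p (Y \<omega>) = real p ^ k}" for k
  have Es: "E k \<in> sets \<Omega>" for k
  proof -
    have "E k = Y -` {y. padic_norm p y = real p ^ k} \<inter> space \<Omega>" unfolding E_def by auto
    then show ?thesis using measurable_sets[OF meas, of "{y. padic_norm p y = real p ^ k}"] by simp
  qed
  have disj: "disjoint_family_on E {1..m}"
    unfolding disjoint_family_on_def E_def
  proof (intro ballI impI)
    fix k l :: nat assume "k \<noteq> l"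
    then have "real p ^ k \<noteq> real p ^ l" using p1 by (simp add: power_inject_exp)
    then show "{\<omega> \<in> space \<Omega>. padic_norm p (Y \<omega>) = real p ^ k} \<inter>
               {\<omega> \<in> space \<Omega>. padic_norm p (Y \<omega>) = real p ^ l} = {}" by auto
  qed
  define U where "U = (\<Union>k\<in>{1..m}. E k)"
  have Us: "U \<in> sets \<Omega>" unfolding U_def using Es by auto
  have "measure \<Omega> U = (\<Sum>k\<in>{1..m}. measure \<Omega> (E k))"
    unfolding U_def using Es disj by (intro finite_measure_finite_Union) auto
  also have "\<dots> = (\<Sum>k\<in>{1..m}. (real p powr b - 1) * real p powr (- real k * b))"
    using law unfolding E_def by (intro sum.cong) auto
  also have "\<dots> = 1 - real p powr (- real m * b)" using geo[OF p1] by simp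
  finally have mU: "measure \<Omega> U = 1 - real p powr (- real m * b)" .
  have sub: "{\<omega> \<in> space \<Omega>. \<not> padic_norm p (Y \<omega>) \<le> real p ^ m} \<subseteq> space \<Omega> - U"
  proof safe
    fix \<omega> assume "\<omega> \<in> space \<Omega>" "\<not> padic_norm p (Y \<omega>) \<le> real p ^ m" "\<omega> \<in> U"
    then obtain k where "k \<in> {1..m}" "padic_norm p (Y \<omega>) = real p ^ k" unfolding U_def E_def by auto
    then have "padic_norm p (Y \<omega>) \<le> real p ^ m" using p1 by (auto intro: power_increasing)
    then show False using \<open>\<not> _ \<le> _\<close> by simp
  qed
  have "measure \<Omega> {\<omega> \<in> space \<Omega>. \<not> padic_norm p (Y \<omega>) \<le> real p ^ m} \<le> measure \<Omega> (space \<Omega> - U)"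
    using sub Us by (intro finite_measure_mono) auto
  also have "\<dots> = 1 - measure \<Omega> U" using prob_compl[OF Us] by simp
  finally show ?thesis using mU by simp
qed

theorem lemma3:
  fixes b :: real and \<sigma> :: "nat \<Rightarrow> real"
    and \<Omega> :: "'w measure" and X :: "nat \<Rightarrow> nat \<Rightarrow> 'w \<Rightarrow> rat"
  assumes b_pos: "b > 0"
    and \<sigma>_nonneg: "\<And>p. prime p \<Longrightarrow> \<sigma> p \<ge> 0"
    and \<sigma>_summable: "\<sigma> summable_on {p. prime p}"
    and prob: "prob_space \<Omega>"
    and indep: "prob_space.indep_vars \<Omega> (\<lambda>_. count_space UNIV) (\<lambda>(p, i). X p i)
                  {(p, i). prime p \<and> i \<ge> 1}"
    and vals: "\<And>p i \<omega>. prime p \<Longrightarrow> i \<ge> 1 \<Longrightarrow> \<omega> \<in> space \<Omega> \<Longrightarrow> X p i \<omega> \<in> Gp p"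
    and law_norm: "\<And>p i k. prime p \<Longrightarrow> i \<ge> 1 \<Longrightarrow> k \<ge> 1 \<Longrightarrow>
        measure \<Omega> {\<omega> \<in> space \<Omega>. padic_norm p (X p i \<omega>) = real p ^ k}
          = (real p powr b - 1) * real p powr (- real k * b)"
    and law_unif: "\<And>p i k x. prime p \<Longrightarrow> i \<ge> 1 \<Longrightarrow> k \<ge> 1 \<Longrightarrow> x \<in> Gp p \<Longrightarrow>
        padic_norm p x = real p ^ k \<Longrightarrow>
        measure \<Omega> {\<omega> \<in> space \<Omega>. X p i \<omega> = x}
          = measure \<Omega> {\<omega> \<in> space \<Omega>. padic_norm p (X p i \<omega>) = real p ^ k}
            / real (card {y \<in> Gp p. padic_norm p y = real p ^ k})"
    and T_pos: "T > 0" and lam_pos: "lam > 0" and \<epsilon>_pos: "\<epsilon> > 0"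
  shows "\<exists>M::nat. liminf (\<lambda>m. ereal (measure \<Omega>
            {\<omega> \<in> space \<Omega>. Lambda_event T M lam (scaled_path b \<sigma> X m \<omega>)}))
          > ereal (1 - \<epsilon>)"
proof -
  interpret prob_space \<Omega> by (rule prob)
  have measX: "X p i \<in> measurable \<Omega> (count_space UNIV)" if "prime p" "i \<ge> 1" for p i
    using indep that unfolding indep_vars_def by auto
  define g where "g p = (if prime p then \<sigma> p else 0)" for p
  have g0: "g p \<ge> 0" for p unfolding g_def using \<sigma>_nonneg by auto
  have "g summable_on UNIV"
    using \<sigma>_summable summable_on_cong_neutral[where f = g and S = UNIV and g = \<sigma> and T = "{p. prime p}"] unfolding g_def by auto
  hence sg: "summable g" by (rule summable_on_imp_summable)
  have Te: "\<epsilon> / (2 * T) > 0" using \<epsilon>_pos T_pos by simp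
  obtain M0 where M0: "\<forall>n\<ge>M0. norm (\<Sum>i. g (i + n)) < \<epsilon> / (2 * T)"
    using suminf_exist_split[OF Te sg] by blast
  define M where "M = max M0 (nat \<lceil>1 / lam\<rceil> + 1)"
  have M_lam: "1 / real p < lam" if "p \<ge> M" for p
  proof -
    have "real p \<ge> real (nat \<lceil>1 / lam\<rceil> + 1)" using that unfolding M_def by simp
    moreover have "real (nat \<lceil>1 / lam\<rceil>) \<ge> 1 / lam" by linarith
    ultimately have h: "real p > 1 / lam" by simp
    moreover have "1 / lam > 0" using lam_pos by simp
    ultimately have "real p > 0" by linarith
    then show ?thesis using lam_pos h by (simp add: field_simps)
  qed
  define tail where "tail = (\<Sum>i. g (i + M))"
  have sgM: "summable (\<lambda>i. g (i + M))" using sg by (rule summable_ignore_initial_segment)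
  have tail0: "0 \<le> tail" unfolding tail_def using sgM g0 by (intro suminf_nonneg) auto
  have "norm tail < \<epsilon> / (2 * T)" using M0 unfolding tail_def M_def by simp
  hence "tail < \<epsilon> / (2 * T)" using tail0 by simp
  hence tailE: "T * tail < \<epsilon> / 2" using T_pos by (simp add: field_simps)
  have main: "1 - \<epsilon> / 2 \<le> measure \<Omega> {\<omega> \<in> space \<Omega>. Lambda_event T M lam (scaled_path b \<sigma> X m \<omega>)}"
    for m
  proof -
    define N where "N p = nat \<lfloor>Dconst b \<sigma> p * real p powr (real m * b) * T\<rfloor>" for p
    define Bad where "Bad p i = {\<omega> \<in> space \<Omega>. \<not> padic_norm p (X p i \<omega>) \<le> real p ^ m}" for p i
    define A where "A j = (if prime (j + M) then \<Union>i\<in>{1..N (j + M)}. Bad (j + M) i else {})" for j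
    define G where "G = {\<omega> \<in> space \<Omega>. Lambda_event T M lam (scaled_path b \<sigma> X m \<omega>)}"
    have Bads: "Bad p i \<in> sets \<Omega>" if "prime p" "i \<ge> 1" for p i
    proof -
      have "Bad p i = X p i -` {y. \<not> padic_norm p y \<le> real p ^ m} \<inter> space \<Omega>"
        unfolding Bad_def by auto
      then show ?thesis
        using measurable_sets[OF measX[OF that], of "{y. \<not> padic_norm p y \<le> real p ^ m}"] by simp
    qed
    have As: "A j \<in> sets \<Omega>" for j
      unfolding A_def using Bads by auto
    have nsteps: "nat \<lfloor>Dconst b \<sigma> p * real p powr (real m * b) * s\<rfloor> \<le> N p"
      if "prime p" "s \<in> {0..T}" for p s
    proof -
      have "0 \<le> Dconst b \<sigma> p * real p powr (real m * b)"
        using Dconst_bounds(1)[where \<sigma> = \<sigma>, OF that(1) b_pos \<sigma>_nonneg[OF that(1)]] by simp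
      then have "Dconst b \<sigma> p * real p powr (real m * b) * s \<le> Dconst b \<sigma> p * real p powr (real m * b) * T"
        using that(2) by (intro mult_left_mono) auto
      then show ?thesis unfolding N_def by (intro nat_mono floor_mono)
    qed
    have Abound: "measure \<Omega> (A j) \<le> T * g (j + M)" for j
    proof (cases "prime (j + M)")
      case False then show ?thesis unfolding A_def g_def by simp
    next
      case True
      define p where "p = j + M"
      have pp: "prime p" using True p_def by simp
      have p1: "real p > 1" using pp prime_gt_1_nat by simp
      have D0: "0 \<le> Dconst b \<sigma> p" and Ds: "Dconst b \<sigma> p \<le> \<sigma> p"
        using Dconst_bounds[where \<sigma> = \<sigma>, OF pp b_pos \<sigma>_nonneg[OF pp]] by auto
      have "measure \<Omega> (A j) = measure \<Omega> (\<Union>i\<in>{1..N p}. Bad p i)" unfolding A_def p_def using True by simp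
      also have "\<dots> \<le> (\<Sum>i\<in>{1..N p}. measure \<Omega> (Bad p i))"
        using Bads pp by (intro measure_UNION_le) auto
      also have "\<dots> \<le> (\<Sum>i\<in>{1..N p}. real p powr (- real m * b))"
      proof (intro sum_mono)
        fix i assume i: "i \<in> {1..N p}"
        show "measure \<Omega> (Bad p i) \<le> real p powr (- real m * b)"
          unfolding Bad_def using i
          by (intro bad_bound[OF prob pp b_pos measX[OF pp]] law_norm[OF pp]) auto
      qed
      also have "\<dots> = real (N p) * real p powr (- real m * b)" by simp
      also have "\<dots> \<le> (Dconst b \<sigma> p * real p powr (real m * b) * T) * real p powr (- real m * b)"
      proof (intro mult_right_mono)
        have "0 \<le> Dconst b \<sigma> p * real p powr (real m * b) * T" using D0 T_pos by simp
        then show "real (N p) \<le> Dconst b \<sigma> p * real p powr (real m * b) * T"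
          unfolding N_def by linarith
      qed simp
      also have "\<dots> = Dconst b \<sigma> p * T * (real p powr (real m * b) * real p powr (- real m * b))"
        by (simp add: algebra_simps)
      also have "real p powr (real m * b) * real p powr (- real m * b) = 1"
        using p1 by (simp add: powr_add[symmetric])
      also have "Dconst b \<sigma> p * T * 1 \<le> T * g (j + M)"
        using Ds T_pos True unfolding g_def p_def by (simp add: mult.commute)
      finally show ?thesis by simp
    qed
    have Gsub: "space \<Omega> - (\<Union>j. A j) \<subseteq> G"
    proof
      fix \<omega> assume w: "\<omega> \<in> space \<Omega> - (\<Union>j. A j)"
      show "\<omega> \<in> G" unfolding G_def Lambda_event_def
      proof (intro CollectI conjI allI impI)
        show "\<omega> \<in> space \<Omega>" using w by simp
        fix p assume pM: "prime p \<and> M \<le> p"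
        have "\<omega> \<notin> A (p - M)" using w by auto
        then have hb: "padic_norm p (X p i \<omega>) \<le> real p ^ m" if "i \<in> {1..N p}" for i
          using pM that w unfolding A_def Bad_def by auto
        have "(SUP s\<in>{0..T}. padic_norm p (scaled_path b \<sigma> X m \<omega> p s)) \<le> 1"
        proof (rule cSUP_least)
          show "{0..T} \<noteq> {}" using T_pos by simp
          fix s assume s: "s \<in> {0..T}"
          show "padic_norm p (scaled_path b \<sigma> X m \<omega> p s) \<le> 1"
            unfolding scaled_path_def
            using pM nsteps[OF _ s] hb by (intro walk_bound) (auto, meson le_trans pM)
        qed
        then have "(SUP s\<in>{0..T}. padic_norm p (scaled_path b \<sigma> X m \<omega> p s)) / real p \<le> 1 / real p"
          by (intro divide_right_mono) auto
        also have "\<dots> < lam" using M_lam pM by simp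
        finally show "(SUP s\<in>{0..T}. padic_norm p (scaled_path b \<sigma> X m \<omega> p s)) / real p < lam" .
      qed
    qed
    have Gs: "G \<in> sets \<Omega>"
      unfolding G_def Lambda_event_def
    proof (intro sets.sets_Collect_countable_All)
      fix p
      show "{\<omega> \<in> space \<Omega>. prime p \<and> M \<le> p \<longrightarrow>
          (SUP s\<in>{0..T}. padic_norm p (scaled_path b \<sigma> X m \<omega> p s)) / real p < lam} \<in> sets \<Omega>"
      proof (cases "prime p")
        case False then show ?thesis by simp
      next
        case True
        show ?thesis
        proof (rule sets_finite_dep[where I = "{1..N p}" and Y = "X p"])
          show "finite {1..N p}" by simp
          show "\<And>i. i \<in> {1..N p} \<Longrightarrow> X p i \<in> measurable \<Omega> (count_space UNIV)"
            using measX[OF True] by auto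
          fix \<omega> \<omega>' assume eq: "\<forall>i\<in>{1..N p}. X p i \<omega> = X p i \<omega>'"
          have "scaled_path b \<sigma> X m \<omega> p s = scaled_path b \<sigma> X m \<omega>' p s" if s: "s \<in> {0..T}" for s
            unfolding scaled_path_def walk_def
            using eq nsteps[OF True s] by (intro arg_cong[where f = "\<lambda>x. _ * frac x"] sum.cong) auto
          then have "(SUP s\<in>{0..T}. padic_norm p (scaled_path b \<sigma> X m \<omega> p s))
                   = (SUP s\<in>{0..T}. padic_norm p (scaled_path b \<sigma> X m \<omega>' p s))"
            by (intro SUP_cong) auto
          then show "(prime p \<and> M \<le> p \<longrightarrow>
              (SUP s\<in>{0..T}. padic_norm p (scaled_path b \<sigma> X m \<omega> p s)) / real p < lam) =
            (prime p \<and> M \<le> p \<longrightarrow>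
              (SUP s\<in>{0..T}. padic_norm p (scaled_path b \<sigma> X m \<omega>' p s)) / real p < lam)"
            by simp
        qed
      qed
    qed
    have sT: "summable (\<lambda>j. T * g (j + M))" using sgM by (rule summable_mult)
    have sA: "summable (\<lambda>j. measure \<Omega> (A j))"
      by (rule summable_comparison_test'[OF sT, of 0]) (use Abound in auto)
    have "measure \<Omega> (\<Union>j. A j) \<le> (\<Sum>j. measure \<Omega> (A j))"
      using As sA by (intro finite_measure_subadditive_countably) auto
    also have "\<dots> \<le> (\<Sum>j. T * g (j + M))" using sA sT Abound by (intro suminf_le) auto
    also have "\<dots> = T * tail" unfolding tail_def using suminf_mult[OF sgM, of T] by simp
    finally have UA: "measure \<Omega> (\<Union>j. A j) < \<epsilon> / 2" using tailE by simp
    have UAs: "(\<Union>j. A j) \<in> sets \<Omega>" using As by auto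
    have "1 - \<epsilon> / 2 \<le> 1 - measure \<Omega> (\<Union>j. A j)" using UA by simp
    also have "\<dots> = measure \<Omega> (space \<Omega> - (\<Union>j. A j))" using prob_compl[OF UAs] by simp
    also have "\<dots> \<le> measure \<Omega> G" using Gsub Gs by (intro finite_measure_mono) auto
    finally show ?thesis unfolding G_def .
  qed
  have "ereal (1 - \<epsilon> / 2) \<le> liminf (\<lambda>m. ereal (measure \<Omega>
            {\<omega> \<in> space \<Omega>. Lambda_event T M lam (scaled_path b \<sigma> X m \<omega>)}))"
    using main by (intro Liminf_bounded) auto
  moreover have "ereal (1 - \<epsilon>) < ereal (1 - \<epsilon> / 2)" using \<epsilon>_pos by simp
  ultimately show ?thesis by (intro exI[of _ M]) (meson less_le_trans)
qed

end
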